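(* The classical monodromy operator $h_\ast:\hat H\to\hat H$ and the operator $\mathrm{Var}^{-1}:\hat H\to\hat H^\ast$ satisfy $$h_\ast=(-1)^n\,\mathrm{Var}\,(\mathrm{Var}^{-1})^T,$$ where $\mathrm{Var}:\hat H^\ast\to\hat H$ is the inverse of $\mathrm{Var}^{-1}$ and $(\mathrm{Var}^{-1})^T:\hat H=\hat H^{\ast\ast}\to\hat H^\ast$ is the transpose of $\mathrm{Var}^{-1}$.
   Context: Let $f=(f_1,\dots,f_{p+1}):(\mathbb C^{n+p},0)\to(\mathbb C^{p+1},0)$ be an analytic germ such that $V=\{f_1=\dots=f_{p+1}=0\}$ is an $(n-1)$-dimensional and $V'=\{f_1=\dots=f_p=0\}$ an $n$-dimensional isolated complete intersection singularity. For a small ball $B_\delta$ and suitable small generic $t$ (with $0<|t_1|\ll\dots\ll|t_{p+1}|\ll\delta$), $V_t=\{x\in B_\delta:f_j(x)=t_j,1\le j\le p+1\}$ and $V'_t=\{x\in B_\delta:f_j(x)=t_j,1\le j\le p\}$; $\hat H=H_n(V'_t,V_t)$, $\hat H^\ast=\operatorname{Hom}(\hat H,\mathbb Z)$. The intersection form $\langle\cdot,\cdot\rangle$ on $\hat H$ is the pullback via the boundary map $\hat H\to H_{n-1}(V_t)$ of the intersection form of $V_t$. Let $\tilde f_{p+1}:V'_t\to\mathbb C$ be a generic perturbation of $f_{p+1}|_{V'_t}$ with only nondegenerate critical points, with distinct critical values $z_1,\dots,z_\nu$, and $z_0$ a noncritical value with $|z_0|>|z_j|$. Paths $u_j$ from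 $z_j$ to $z_0$ in the disc $D=\{|z|\le|z_0|\}$, non-self-intersecting, pairwise meeting only at $z_0$, numbered clockwise by order of arrival at $z_0$ starting from $\partial D$, define (up to orientation) thimbles $\hat\delta_j\in\hat H$ forming a distinguished basis; $\{\nabla_j\}$ is the dual basis. $\mathrm{Var}^{-1}:\hat H\to\hat H^\ast$ is defined by $\mathrm{Var}^{-1}(\hat\delta_i)=(-1)^{n(n+1)/2}\nabla_i-\sum_{j<i}\langle\hat\delta_i,\hat\delta_j\rangle\nabla_j$ (independent of the distinguished basis). The classical monodromy $h_\ast:\hat H\to\hat H$ is the automorphism induced by going once counterclockwise around $\partial D$; equivalently $h_\ast=h_{\hat\delta_1}\circ\dots\circ h_{\hat\delta_\nu}$ with $h_{\hat\delta}(y)=y+(-1)^{n(n+1)/2}\langle y,\hat\delta\rangle\hat\delta$. *)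

theory Defs
  imports "Jordan_Normal_Form.Matrix"
begin

text \<open>Coordinates: elements of H^ are integer column vectors w.r.t. the distinguished
basis delta_0,...,delta_(nu-1) (paper: delta_1..delta_nu); elements of H^* are
column vectors w.r.t. the dual basis nabla. The intersection form is encoded by
its Gram matrix S, S(i,j) = <delta_i, delta_j>.\<close>

definition sgn_eps :: "nat \<Rightarrow> int" where
  "sgn_eps n = (-1) ^ (n * (n + 1) div 2)"

text \<open>Matrix of Var^{-1} : H^ -> H^*; column j = coordinates of Var^{-1}(delta_j),
Var^{-1}(delta_j) = eps nabla_j - sum_{k<j} <delta_j,delta_k> nabla_k.\<close>
definition var_inv_mat :: "nat \<Rightarrow> nat \<Rightarrow> int mat \<Rightarrow> int mat" where
  "var_inv_mat n \<nu> S = mat \<nu> \<nu> (\<lambda>(k, j). if k = j then sgn_eps n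
                                      else if k < j then - S $$ (j, k) else 0)"

text \<open>Matrix of the Picard-Lefschetz transformation h_{delta_k}:
h(y) = y + eps <y, delta_k> delta_k.\<close>
definition PL_mat :: "nat \<Rightarrow> nat \<Rightarrow> int mat \<Rightarrow> nat \<Rightarrow> int mat" where
  "PL_mat n \<nu> S k = mat \<nu> \<nu> (\<lambda>(r, c). (if r = c then 1 else 0)
                              + (if r = k then sgn_eps n * S $$ (c, k) else 0))"

definition monodromy_mat :: "nat \<Rightarrow> nat \<Rightarrow> int mat \<Rightarrow> int mat" where
  "monodromy_mat n \<nu> S = foldr (\<lambda>k M. PL_mat n \<nu> S k * M) [0..<\<nu>] (1\<^sub>m \<nu>)"

end

theory Submission imports Defs "Jordan_Normal_Form.Determinant" begin

lemma eps_sq: "sgn_eps n * sgn_eps n = 1"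
  unfolding sgn_eps_def by (simp add: power_mult_distrib[symmetric])

lemma diag_id:
  assumes "n \<ge> 1"
  shows "sgn_eps n + (-1) ^ ((n - 1) * (n - 2) div 2) * (1 + (-1) ^ (n - 1)) = (-1) ^ n * (sgn_eps n :: int)"
proof (cases "even n")
  case True
  then have "odd (n - 1)" using assms by simp
  then have "(-1::int) ^ (n - 1) = -1" by simp
  then show ?thesis using True by simp
next
  case False
  define a where "a = (n - 1) * (n - 2) div 2"
  define b where "b = n * (n + 1) div 2"
  obtain k where k: "n = 2*k+1" using False by (metis oddE)
  have ab: "a + b = 2 * (2*k*k + k) + 1"
  proof (cases k)
    case 0 then show ?thesis using k by (simp add: a_def b_def)
  next
    case (Suc j)
    have a0: "(n - 1) * (n - 2) = 2 * ((j+1)*(2*j+1))" using k Suc by (simp add: algebra_simps)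
    have a: "a = (j+1)*(2*j+1)" unfolding a_def a0 by simp
    have b0: "n * (n + 1) = 2 * ((2*j+3)*(j+2))" using k Suc by (simp add: algebra_simps)
    have b: "b = (2*j+3)*(j+2)" unfolding b_def b0 by simp
    show ?thesis unfolding a b using Suc by (simp add: algebra_simps)
  qed
  have "(-1::int) ^ a * (-1) ^ b = -1"
    unfolding power_add[symmetric] ab by simp
  note x = this
  have bb: "(-1::int) ^ b * (-1) ^ b = 1" by (simp add: power_mult_distrib[symmetric])
  have ab2: "(-1::int) ^ a = - ((-1) ^ b)"
  proof -
    have "(-1::int) ^ a = (-1) ^ a * ((-1) ^ b * (-1) ^ b)" using bb by simp
    also have "\<dots> = ((-1) ^ a * (-1) ^ b) * (-1) ^ b" by (simp only: mult.assoc)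
    also have "\<dots> = - ((-1) ^ b)" using x by simp
    finally show ?thesis .
  qed
  have "even (n - 1)" using False by simp
  then have o: "(-1::int) ^ (n - 1) = 1" by simp
  have on: "(-1::int) ^ n = -1" using False by simp
  show ?thesis unfolding sgn_eps_def a_def[symmetric] b_def[symmetric] o on ab2 by simp
qed
definition MM :: "nat \<Rightarrow> nat \<Rightarrow> int mat \<Rightarrow> nat list \<Rightarrow> int mat" where
  "MM n \<nu> S xs = foldr (\<lambda>k M. PL_mat n \<nu> S k * M) xs (1\<^sub>m \<nu>)"

lemma MM_carrier: "MM n \<nu> S xs \<in> carrier_mat \<nu> \<nu>"
  by (induction xs) (auto simp: MM_def PL_mat_def)

lemma MM_Cons: "MM n \<nu> S (k # xs) = PL_mat n \<nu> S k * MM n \<nu> S xs"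
  by (simp add: MM_def)

lemma PL_other:
  assumes Y: "Y \<in> carrier_mat \<nu> \<nu>" and r: "r < \<nu>" and c: "c < \<nu>" and rk: "r \<noteq> k"
  shows "(PL_mat n \<nu> S k * Y) $$ (r, c) = Y $$ (r, c)"
proof -
  have "(PL_mat n \<nu> S k * Y) $$ (r, c) = (\<Sum>j<\<nu>. (if r = j then 1 else 0) * Y $$ (j, c))"
    using Y r c rk by (simp add: PL_mat_def scalar_prod_def lessThan_atLeast0)
  also have "\<dots> = (\<Sum>j<\<nu>. if j = r then Y $$ (j, c) else 0)"
    by (rule sum.cong) auto
  also have "\<dots> = Y $$ (r, c)" using r by simp
  finally show ?thesis .
qed

lemma MM_notin:
  assumes "r < \<nu>" "c < \<nu>" "r \<notin> set xs"
  shows "MM n \<nu> S xs $$ (r, c) = (if r = c then 1 else 0)"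
  using assms
proof (induction xs)
  case Nil then show ?case by (simp add: MM_def)
next
  case (Cons k xs)
  then show ?case by (simp add: MM_Cons PL_other[OF MM_carrier])
qed

lemma MM_step:
  assumes "m < \<nu>" "r < \<nu>" "c < \<nu>" "r \<noteq> m"
  shows "MM n \<nu> S [m..<\<nu>] $$ (r, c) = MM n \<nu> S [Suc m..<\<nu>] $$ (r, c)"
  using assms by (simp add: upt_conv_Cons MM_Cons PL_other[OF MM_carrier])

lemma main_row:
  assumes S: "S \<in> carrier_mat \<nu> \<nu>" and mn: "m \<le> \<nu>"
  shows "\<forall>r c. m \<le> r \<longrightarrow> r < \<nu> \<longrightarrow> c < \<nu> \<longrightarrow>
     sgn_eps n * MM n \<nu> S [m..<\<nu>] $$ (r, c)
       - (\<Sum>j<\<nu>. if r < j then S $$ (j, r) * MM n \<nu> S [m..<\<nu>] $$ (j, c) else 0)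
     = sgn_eps n * (if r = c then 1 else 0) + (if c \<le> r then S $$ (c, r) else 0)"
  using mn
proof (induction m rule: inc_induct)
  case base
  then show ?case by auto
next
  case (step m)
  let ?e = "sgn_eps n"
  let ?X = "MM n \<nu> S [m..<\<nu>]"
  let ?Y = "MM n \<nu> S [Suc m..<\<nu>]"
  show ?case
  proof (intro allI impI)
    fix r c assume mr: "m \<le> r" and r: "r < \<nu>" and c: "c < \<nu>"
    show "?e * ?X $$ (r, c) - (\<Sum>j<\<nu>. if r < j then S $$ (j, r) * ?X $$ (j, c) else 0)
       = ?e * (if r = c then 1 else 0) + (if c \<le> r then S $$ (c, r) else 0)"
    proof (cases "r = m")
      case False
      then have sr: "Suc m \<le> r" using mr by simp
      have s: "(\<Sum>j<\<nu>. if r < j then S $$ (j, r) * ?X $$ (j, c) else 0)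
          = (\<Sum>j<\<nu>. if r < j then S $$ (j, r) * ?Y $$ (j, c) else 0)"
        by (rule sum.cong) (use MM_step[OF step(2) _ c] mr in auto)
      show ?thesis using step(3) sr r c s MM_step[OF step(2) r c False] by simp
    next
      case True
      have Xrc: "?X $$ (m, c) = (\<Sum>j<\<nu>. ((if m = j then 1 else 0) + ?e * S $$ (j, m)) * ?Y $$ (j, c))"
        using step(2) c MM_carrier[of n \<nu> S "[Suc m..<\<nu>]"]
        by (simp add: upt_conv_Cons MM_Cons PL_mat_def scalar_prod_def lessThan_atLeast0)
      also have "\<dots> = (\<Sum>j<\<nu>. (if j = m then ?Y $$ (j, c) else 0)) + ?e * (\<Sum>j<\<nu>. S $$ (j, m) * ?Y $$ (j, c))"
      proof -
        have "(\<Sum>j<\<nu>. ((if m = j then 1 else 0) + ?e * S $$ (j, m)) * ?Y $$ (j, c))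
           = (\<Sum>j<\<nu>. (if j = m then ?Y $$ (j, c) else 0) + ?e * (S $$ (j, m) * ?Y $$ (j, c)))"
          by (rule sum.cong) (auto simp: algebra_simps)
        then show ?thesis by (simp only: sum.distrib sum_distrib_left)
      qed
      also have "(\<Sum>j<\<nu>. S $$ (j, m) * ?Y $$ (j, c))
          = (\<Sum>j<\<nu>. (if j = c then (if c \<le> m then S $$ (c, m) else 0) else 0)
                    + (if m < j then S $$ (j, m) * ?X $$ (j, c) else 0))"
      proof (rule sum.cong)
        fix j assume j: "j \<in> {..<\<nu>}"
        show "S $$ (j, m) * ?Y $$ (j, c) = (if j = c then (if c \<le> m then S $$ (c, m) else 0) else 0)
                    + (if m < j then S $$ (j, m) * ?X $$ (j, c) else 0)"
        proof (cases "j \<le> m")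
          case True
          then show ?thesis using MM_notin[of j \<nu> c "[Suc m..<\<nu>]" n S] j c by auto
        next
          case False
          then show ?thesis using MM_step[OF step(2) _ c, of j n S] j by auto
        qed
      qed simp
      also have "\<dots> = (if c \<le> m then S $$ (c, m) else 0)
                    + (\<Sum>j<\<nu>. if m < j then S $$ (j, m) * ?X $$ (j, c) else 0)"
        using c by (simp add: sum.distrib)
      finally have "?X $$ (m, c) = ?Y $$ (m, c) + ?e * ((if c \<le> m then S $$ (c, m) else 0)
                    + (\<Sum>j<\<nu>. if m < j then S $$ (j, m) * ?X $$ (j, c) else 0))"
        using step(2) by simp
      moreover have "?Y $$ (m, c) = (if m = c then 1 else 0)"
        using MM_notin[of m \<nu> c "[Suc m..<\<nu>]" n S] step(2) c by simp
      ultimately have "?e * ?X $$ (m, c) = ?e * (if m = c then 1 else 0) + (?e * ?e) * ((if c \<le> m then S $$ (c, m) else 0)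
                    + (\<Sum>j<\<nu>. if m < j then S $$ (j, m) * ?X $$ (j, c) else 0))"
        by (simp add: algebra_simps)
      then show ?thesis unfolding True using eps_sq[of n] by simp
    qed
  qed
qed

lemma smult_smult_mat': "(a::int) \<cdot>\<^sub>m (b \<cdot>\<^sub>m A) = (a * b) \<cdot>\<^sub>m A"
  by (rule eq_matI) auto

lemma smult_one_mat': "(1::int) \<cdot>\<^sub>m A = A"
  by (rule eq_matI) auto

lemma var_inv_invertible:
  "invertible_mat (var_inv_mat n \<nu> S)"
proof -
  let ?V = "var_inv_mat n \<nu> S"
  have V: "?V \<in> carrier_mat \<nu> \<nu>" by (simp add: var_inv_mat_def)
  have ut: "upper_triangular ?V"
    by (auto simp: upper_triangular_def var_inv_mat_def)
  have "diag_mat ?V = map (\<lambda>i. sgn_eps n) [0..<\<nu>]"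
    by (auto simp: diag_mat_def var_inv_mat_def)
  then have dV: "det ?V = sgn_eps n ^ \<nu>"
    using det_upper_triangular[OF ut V] by (simp add: map_replicate_const)
  have dd: "det ?V * det ?V = 1"
    unfolding dV by (metis eps_sq power_mult_distrib power_one)
  define B where "B = det ?V \<cdot>\<^sub>m adj_mat ?V"
  have B: "B \<in> carrier_mat \<nu> \<nu>" using adj_mat(1)[OF V] by (simp add: B_def)
  have "?V * B = 1\<^sub>m \<nu>"
    unfolding B_def using adj_mat[OF V] V dd
    by (simp add: mult_smult_distrib[OF V adj_mat(1)[OF V]] smult_smult_mat' smult_one_mat')
  moreover have "B * ?V = 1\<^sub>m \<nu>"
    unfolding B_def using adj_mat[OF V] V dd
    by (simp add: mult_smult_assoc_mat[OF adj_mat(1)[OF V] V] smult_smult_mat' smult_one_mat')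
  ultimately show ?thesis using V B
    unfolding invertible_mat_def inverts_mat_def square_mat.simps by auto
qed

theorem proposition4:
  fixes n \<nu> :: nat and S :: "int mat"
  assumes "n \<ge> 1"
    and "S \<in> carrier_mat \<nu> \<nu>"
    and "\<And>i j. i < \<nu> \<Longrightarrow> j < \<nu> \<Longrightarrow> S $$ (i, j) = (-1) ^ (n - 1) * S $$ (j, i)"
    and "\<And>i. i < \<nu> \<Longrightarrow>
           S $$ (i, i) = (-1) ^ ((n - 1) * (n - 2) div 2) * (1 + (-1) ^ (n - 1))"
  shows "invertible_mat (var_inv_mat n \<nu> S) \<and>
         (\<forall>Var \<in> carrier_mat \<nu> \<nu>. inverts_mat Var (var_inv_mat n \<nu> S) \<and>
                                  inverts_mat (var_inv_mat n \<nu> S) Var \<longrightarrow>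
            monodromy_mat n \<nu> S = ((-1) ^ n) \<cdot>\<^sub>m (Var * transpose_mat (var_inv_mat n \<nu> S)))"
proof -
  let ?V = "var_inv_mat n \<nu> S"
  let ?M = "monodromy_mat n \<nu> S"
  let ?e = "sgn_eps n"
  have V: "?V \<in> carrier_mat \<nu> \<nu>" by (simp add: var_inv_mat_def)
  have Mdef: "?M = MM n \<nu> S [0..<\<nu>]" by (simp add: monodromy_mat_def MM_def)
  have M: "?M \<in> carrier_mat \<nu> \<nu>" unfolding Mdef by (rule MM_carrier)
  have sgn: "(-1::int) ^ (n - 1) = - ((-1) ^ n)"
  proof -
    obtain m where m: "n = Suc m" using assms(1) by (cases n) auto
    show ?thesis unfolding m by simp
  qed
  have VM: "?V * ?M = ((-1) ^ n) \<cdot>\<^sub>m transpose_mat ?V"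
  proof (rule eq_matI)
    fix r c assume r: "r < dim_row (((-1) ^ n) \<cdot>\<^sub>m transpose_mat ?V)"
      and c: "c < dim_col (((-1) ^ n) \<cdot>\<^sub>m transpose_mat ?V)"
    then have r: "r < \<nu>" and c: "c < \<nu>" by (auto simp: var_inv_mat_def)
    have "(?V * ?M) $$ (r, c) = (\<Sum>j<\<nu>. ?V $$ (r, j) * ?M $$ (j, c))"
      using r c V M by (simp add: scalar_prod_def lessThan_atLeast0)
    also have "\<dots> = (\<Sum>j<\<nu>. (if j = r then ?e * ?M $$ (j, c) else 0)
                  - (if r < j then S $$ (j, r) * ?M $$ (j, c) else 0))"
      by (rule sum.cong) (auto simp: var_inv_mat_def r)
    also have "\<dots> = ?e * ?M $$ (r, c) - (\<Sum>j<\<nu>. if r < j then S $$ (j, r) * ?M $$ (j, c) else 0)"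
      using r by (simp add: sum_subtractf)
    also have "\<dots> = ?e * (if r = c then 1 else 0) + (if c \<le> r then S $$ (c, r) else 0)"
      using main_row[OF assms(2), of 0 n] r c unfolding Mdef by auto
    also have "\<dots> = (((-1) ^ n) \<cdot>\<^sub>m transpose_mat ?V) $$ (r, c)"
    proof -
      consider "r = c" | "c < r" | "r < c" by linarith
      then show ?thesis
      proof cases
        case 1
        then show ?thesis using r c assms(4)[OF r] diag_id[OF assms(1)]
          by (simp add: var_inv_mat_def)
      next
        case 2
        then show ?thesis using r c assms(3)[OF c r] sgn
          by (simp add: var_inv_mat_def)
      next
        case 3
        then show ?thesis using r c by (simp add: var_inv_mat_def)
      qed
    qed
    finally show "(?V * ?M) $$ (r, c) = (((-1) ^ n) \<cdot>\<^sub>m transpose_mat ?V) $$ (r, c)" .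
  qed (insert M V, auto)
  show ?thesis
  proof (intro conjI ballI impI)
    show "invertible_mat ?V" by (rule var_inv_invertible)
  next
    fix Var :: "int mat" assume Var: "Var \<in> carrier_mat \<nu> \<nu>"
      and inv: "inverts_mat Var ?V \<and> inverts_mat ?V Var"
    then have VV: "Var * ?V = 1\<^sub>m \<nu>" by (simp add: inverts_mat_def)
    have "?M = (Var * ?V) * ?M" using VV M by simp
    also have "\<dots> = Var * (?V * ?M)" using Var V M by simp
    also have "\<dots> = ((-1) ^ n) \<cdot>\<^sub>m (Var * transpose_mat ?V)"
      unfolding VM using Var V by (simp add: mult_smult_distrib[of _ \<nu> \<nu> _ \<nu>])
    finally show "?M = ((-1) ^ n) \<cdot>\<^sub>m (Var * transpose_mat ?V)" .
  qed
qed

end
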